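(* Let $G=(V,E)$ be a directed acyclic graph with real edge weights, let $s_1,t_1,s_2,t_2\in V$, let $E_\cap=E(s_1,t_1)\cap E(s_2,t_2)$, and let $\mathcal{B}$ be the set of vertex sets of the connected components of the undirected graph obtained from $(V,E_\cap)$ by ignoring edge directions. Let $i\in\{1,2\}$, let $P$ be a shortest path from $s_i$ to $t_i$, and let $x,y\in B$ for some $B\in\mathcal{B}$ with $x$ preceding $y$ on $P$. Then the subpath $P[x,y]$ lies in the induced subgraph of $(V,E_\cap)$ on $B$, i.e. all its vertices lie in $B$ and all its edges lie in $E_\cap$.
   Context: $E(x,y)$ is the set of edges lying on at least one shortest (minimum weight) path from $x$ to $y$. For a path $P$, $x$ precedes $y$ if $x=y$ or $x$ appears before $y$; $P[x,y]$ is the subpath from $x$ to $y$. *)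

theory Defs
  imports Complex_Main
begin

definition dag :: "'a set \<Rightarrow> ('a \<times> 'a) set \<Rightarrow> bool" where
  "dag V E \<longleftrightarrow> finite V \<and> E \<subseteq> V \<times> V \<and> (\<forall>v. (v, v) \<notin> E\<^sup>+)"

definition path_edges :: "'a list \<Rightarrow> ('a \<times> 'a) list" where
  "path_edges P = zip P (tl P)"

definition is_path :: "('a \<times> 'a) set \<Rightarrow> 'a \<Rightarrow> 'a \<Rightarrow> 'a list \<Rightarrow> bool" where
  "is_path E x y P \<longleftrightarrow> P \<noteq> [] \<and> hd P = x \<and> last P = y \<and> set (path_edges P) \<subseteq> E"

definition path_weight :: "('a \<times> 'a \<Rightarrow> real) \<Rightarrow> 'a list \<Rightarrow> real" where
  "path_weight w P = sum_list (map w (path_edges P))"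

definition shortest_path ::
  "('a \<times> 'a) set \<Rightarrow> ('a \<times> 'a \<Rightarrow> real) \<Rightarrow> 'a \<Rightarrow> 'a \<Rightarrow> 'a list \<Rightarrow> bool" where
  "shortest_path E w x y P \<longleftrightarrow> is_path E x y P \<and>
     (\<forall>Q. is_path E x y Q \<longrightarrow> path_weight w P \<le> path_weight w Q)"

definition sp_edges ::
  "('a \<times> 'a) set \<Rightarrow> ('a \<times> 'a \<Rightarrow> real) \<Rightarrow> 'a \<Rightarrow> 'a \<Rightarrow> ('a \<times> 'a) set" where
  "sp_edges E w x y = {e. \<exists>P. shortest_path E w x y P \<and> e \<in> set (path_edges P)}"

definition undirected_components :: "'a set \<Rightarrow> ('a \<times> 'a) set \<Rightarrow> 'a set set" where
  "undirected_components V F = {{u \<in> V. (v, u) \<in> (F \<union> F\<inverse>)\<^sup>*} | v. v \<in> V}"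

text \<open>Subpath P[x,y] where x = P!i and y = P!j, i \<le> j.\<close>
definition subpath :: "'a list \<Rightarrow> nat \<Rightarrow> nat \<Rightarrow> 'a list" where
  "subpath P i j = drop i (take (Suc j) P)"

end

theory Submission
  imports Defs
begin

lemma pe_cons2[simp]: "path_edges (a # b # zs) = (a, b) # path_edges (b # zs)"
  by (simp add: path_edges_def)

lemma pe_single[simp]: "path_edges [a] = []"
  by (simp add: path_edges_def)

lemma pe_join:
  "xs \<noteq> [] \<Longrightarrow> ys \<noteq> [] \<Longrightarrow> last xs = hd ys \<Longrightarrow>
   path_edges (xs @ tl ys) = path_edges xs @ path_edges ys"
proof (induction xs)
  case Nil then show ?case by simp
next
  case (Cons a xs)
  show ?case
  proof (cases xs)
    case Nil
    then show ?thesis using Cons.prems by (cases ys) auto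
  next
    case (Cons b zs)
    have "path_edges (xs @ tl ys) = path_edges xs @ path_edges ys"
      using Cons.IH Cons.prems Cons by auto
    then show ?thesis using Cons by simp
  qed
qed

lemma pw_join:
  "xs \<noteq> [] \<Longrightarrow> ys \<noteq> [] \<Longrightarrow> last xs = hd ys \<Longrightarrow>
   path_weight w (xs @ tl ys) = path_weight w xs + path_weight w ys"
  by (simp add: path_weight_def pe_join)

lemma path_join:
  assumes "is_path E a b xs" "is_path E b c ys"
  shows "is_path E a c (xs @ tl ys)"
proof -
  have ne: "xs \<noteq> []" "ys \<noteq> []" "last xs = hd ys" using assms by (auto simp: is_path_def)
  have "last (xs @ tl ys) = c"
  proof (cases "tl ys = []")
    case True
    then have "ys = [hd ys]" using ne by (cases ys) auto
    then show ?thesis using assms ne True by (auto simp: is_path_def)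
  next
    case False
    then show ?thesis using assms ne by (auto simp: is_path_def last_tl)
  qed
  then show ?thesis using assms ne by (auto simp: is_path_def pe_join)
qed

lemma split_at:
  assumes "i < length L"
  shows "L = take (Suc i) L @ tl (drop i L)" "take (Suc i) L \<noteq> []"
    "last (take (Suc i) L) = L ! i" "hd (drop i L) = L ! i" "drop i L \<noteq> []"
proof -
  show "L = take (Suc i) L @ tl (drop i L)" by (metis append_take_drop_id drop_Suc tl_drop)
  show "take (Suc i) L \<noteq> []" "drop i L \<noteq> []" using assms by auto
  show "last (take (Suc i) L) = L ! i" using assms by (simp add: take_Suc_conv_app_nth)
  show "hd (drop i L) = L ! i" using assms by (simp add: hd_drop_conv_nth)
qed

lemma path_pre:
  assumes "is_path E a b P" "i < length P"
  shows "is_path E a (P!i) (take (Suc i) P)" "is_path E (P!i) b (drop i P)"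
proof -
  note s = split_at[OF assms(2)]
  have "set (path_edges P) = set (path_edges (take (Suc i) P)) \<union> set (path_edges (drop i P))"
    using s pe_join[of "take (Suc i) P" "drop i P"] by (metis set_append)
  then show "is_path E a (P!i) (take (Suc i) P)" "is_path E (P!i) b (drop i P)"
    using assms s by (auto simp: is_path_def hd_conv_nth)
qed

definition onp where
  "onp E w a b u p \<longleftrightarrow> (\<exists>Q k. shortest_path E w a b Q \<and> k < length Q \<and> Q!k = u
      \<and> path_weight w (take (Suc k) Q) = p)"

lemma weight_split:
  assumes "i < length L"
  shows "path_weight w L = path_weight w (take (Suc i) L) + path_weight w (drop i L)"
  using split_at[OF assms] pw_join by metis

lemma onp_unique:
  assumes "onp E w a b u p" "onp E w a b u p'"
  shows "p = p'"
proof -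
  obtain Q k where Q: "shortest_path E w a b Q" "k < length Q" "Q!k = u"
    "path_weight w (take (Suc k) Q) = p" using assms(1) onp_def by metis
  obtain Q' k' where Q': "shortest_path E w a b Q'" "k' < length Q'" "Q'!k' = u"
    "path_weight w (take (Suc k') Q') = p'" using assms(2) onp_def by metis
  have p1: "is_path E a u (take (Suc k) Q)" "is_path E u b (drop k Q)"
    using path_pre Q by (metis shortest_path_def)+
  have p2: "is_path E a u (take (Suc k') Q')" "is_path E u b (drop k' Q')"
    using path_pre Q' by (metis shortest_path_def)+
  have j1: "is_path E a b (take (Suc k) Q @ tl (drop k' Q'))" using path_join p1 p2 by metis
  have j2: "is_path E a b (take (Suc k') Q' @ tl (drop k Q))" using path_join p1 p2 by metis
  have w1: "path_weight w (take (Suc k) Q @ tl (drop k' Q')) = p + path_weight w (drop k' Q')"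
    using pw_join p1 p2 Q Q' by (metis is_path_def)
  have w2: "path_weight w (take (Suc k') Q' @ tl (drop k Q)) = p' + path_weight w (drop k Q)"
    using pw_join p1 p2 Q Q' by (metis is_path_def)
  have "path_weight w Q' \<le> path_weight w (take (Suc k) Q @ tl (drop k' Q'))"
    using Q' j1 shortest_path_def by metis
  moreover have "path_weight w Q \<le> path_weight w (take (Suc k') Q' @ tl (drop k Q))"
    using Q j2 shortest_path_def by metis
  moreover have "path_weight w Q \<le> path_weight w Q'" "path_weight w Q' \<le> path_weight w Q"
    using Q Q' shortest_path_def by metis+
  moreover have "path_weight w Q = p + path_weight w (drop k Q)"
    using weight_split Q by metis
  moreover have "path_weight w Q' = p' + path_weight w (drop k' Q')"
    using weight_split Q' by metis
  ultimately show ?thesis using w1 w2 by linarith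
qed

lemma edge_in_pe:
  assumes "(u, v) \<in> set (path_edges L)"
  shows "\<exists>k. Suc k < length L \<and> L!k = u \<and> L!Suc k = v"
  using assms apply (auto simp: path_edges_def set_zip nth_tl)
  subgoal for i by (rule exI[of _ i]) auto
  done

lemma pe_edge:
  assumes "Suc m < length L"
  shows "(L!m, L!Suc m) \<in> set (path_edges L)"
  using assms unfolding path_edges_def set_zip
  by (auto simp: nth_tl intro!: exI[of _ m])

lemma onp_edge:
  assumes "(u, v) \<in> sp_edges E w a b"
  shows "\<exists>p. onp E w a b u p \<and> onp E w a b v (p + w (u, v))"
proof -
  obtain Q where Q: "shortest_path E w a b Q" "(u, v) \<in> set (path_edges Q)"
    using assms unfolding sp_edges_def by blast
  obtain k where k: "Suc k < length Q" "Q!k = u" "Q!Suc k = v" using edge_in_pe Q by metis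
  have "take (Suc (Suc k)) Q = take (Suc k) Q @ tl [u, v]"
    using k by (simp add: take_Suc_conv_app_nth)
  then have "path_weight w (take (Suc (Suc k)) Q) = path_weight w (take (Suc k) Q) + w (u, v)"
    using pw_join[of "take (Suc k) Q" "[u,v]" w] k
    by (simp add: take_Suc_conv_app_nth path_weight_def)
  then show ?thesis using Q k unfolding onp_def
    by (metis Suc_lessD)
qed

lemma onp_edge2:
  assumes "(u, v) \<in> (sp_edges E w a b \<inter> sp_edges E w c d) \<union> (sp_edges E w a b \<inter> sp_edges E w c d)\<inverse>"
  shows "\<exists>p q p' q'. onp E w a b u p \<and> onp E w c d u q \<and> onp E w a b v p' \<and> onp E w c d v q'
     \<and> p - q = p' - q'"
  using assms
proof
  assume "(u, v) \<in> sp_edges E w a b \<inter> sp_edges E w c d"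
  then obtain p q where "onp E w a b u p" "onp E w a b v (p + w (u, v))"
     "onp E w c d u q" "onp E w c d v (q + w (u, v))" using onp_edge by (metis IntE)
  then show ?thesis by (intro exI[of _ p] exI[of _ q] exI[of _ "p + w (u,v)"] exI[of _ "q + w (u,v)"]) auto
next
  assume "(u, v) \<in> (sp_edges E w a b \<inter> sp_edges E w c d)\<inverse>"
  then obtain p q where "onp E w a b v p" "onp E w a b u (p + w (v, u))"
     "onp E w c d v q" "onp E w c d u (q + w (v, u))" using onp_edge by (metis IntE converseD)
  then show ?thesis by (intro exI[of _ "p + w (v,u)"] exI[of _ "q + w (v,u)"] exI[of _ p] exI[of _ q]) auto
qed

lemma conn:
  assumes "(x, z) \<in> ((sp_edges E w a b \<inter> sp_edges E w c d) \<union> (sp_edges E w a b \<inter> sp_edges E w c d)\<inverse>)\<^sup>*"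
  shows "x = z \<or> (\<exists>p q p' q'. onp E w a b x p \<and> onp E w c d x q \<and> onp E w a b z p' \<and> onp E w c d z q'
     \<and> p - q = p' - q')"
  using assms
proof (induction rule: rtrancl_induct)
  case base then show ?case by simp
next
  case (step z z')
  obtain p q p' q' where e: "onp E w a b z p" "onp E w c d z q" "onp E w a b z' p'" "onp E w c d z' q'"
     "p - q = p' - q'" using onp_edge2[OF step(2)] by blast
  show ?case
  proof (cases "x = z")
    case True then show ?thesis using e by blast
  next
    case False
    then obtain p0 q0 p1 q1 where f: "onp E w a b x p0" "onp E w c d x q0" "onp E w a b z p1"
      "onp E w c d z q1" "p0 - q0 = p1 - q1" using step(3) by blast
    have "p1 = p" "q1 = q" using onp_unique e f by metis+
    then show ?thesis using e f by (intro disjI2 exI[of _ p0] exI[of _ q0] exI[of _ p'] exI[of _ q']) auto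
  qed
qed

lemma path_trancl:
  assumes "set (path_edges L) \<subseteq> E" "i < j" "j < length L"
  shows "(L!i, L!j) \<in> E\<^sup>+"
  using assms(2,3)
proof (induction j)
  case 0 then show ?case by simp
next
  case (Suc j)
  have e: "(L!j, L!Suc j) \<in> E" using pe_edge[of j L] Suc.prems assms(1) by auto
  show ?case
  proof (cases "i = j")
    case True then show ?thesis using e by auto
  next
    case False then show ?thesis using Suc e by (meson less_SucE Suc_lessD trancl.trancl_into_trancl)
  qed
qed

lemma reach_sub:
  assumes "set (path_edges S) \<subseteq> F" "m < length S"
  shows "(S!0, S!m) \<in> (F \<union> F\<inverse>)\<^sup>*"
  using assms(2)
proof (induction m)
  case 0 then show ?case by simp
next
  case (Suc m)
  have "(S!m, S!Suc m) \<in> F" using pe_edge[of m S] Suc.prems assms(1) by auto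
  then show ?case using Suc by (meson Suc_lessD UnI1 rtrancl.rtrancl_into_rtrancl)
qed

lemma helper:
  fixes F R
  assumes acyc: "\<forall>v. (v, v) \<notin> E\<^sup>+"
    and P: "shortest_path E w a b P"
    and Fd: "F = sp_edges E w a b \<inter> sp_edges E w c d"
    and Rd: "R = F \<union> F\<inverse>"
    and xy: "(x, y) \<in> R\<^sup>*"
    and ij: "i \<le> j" "j < length P" "P!i = x" "P!j = y"
  shows "set (path_edges (subpath P i j)) \<subseteq> F \<and> (\<forall>u\<in>set (subpath P i j). (x, u) \<in> R\<^sup>*)"
proof -
  define S where "S = subpath P i j"
  define L where "L = take (Suc j) P"
  have SL: "S = drop i L" unfolding S_def L_def subpath_def by simp
  have iL: "i < length L" using ij L_def by simp
  have Lj: "L ! i = x" using ij L_def by simp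
  have Sne: "S \<noteq> []" "S!0 = x" using SL iL Lj by auto
  have pathP: "is_path E a b P" using P shortest_path_def by metis
  have pL: "is_path E a y L" using path_pre[OF pathP ij(2)] ij L_def by simp
  have pS: "is_path E x y S" using path_pre[OF pL iL] SL Lj by simp
  have pedP: "set (path_edges P) \<subseteq> sp_edges E w a b"
    using P by (auto simp: sp_edges_def)
  have LP: "set (path_edges L) \<subseteq> set (path_edges P)"
    using split_at[OF ij(2)] pe_join[of L "drop j P"] L_def by (metis Un_upper1 set_append)
  have SLe: "set (path_edges S) \<subseteq> set (path_edges L)"
    using split_at[OF iL] pe_join[of "take (Suc i) L" "drop i L"] SL by (metis Un_upper2 set_append)
  have Sab: "set (path_edges S) \<subseteq> sp_edges E w a b" using SLe LP pedP by blast
  have Scd: "set (path_edges S) \<subseteq> F"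
  proof (cases "x = y")
    case True
    have "i = j"
    proof (rule ccontr)
      assume "i \<noteq> j"
      then have "(P!i, P!j) \<in> E\<^sup>+" using path_trancl[of P E i j] pathP ij unfolding is_path_def by auto
      then show False using acyc True ij by auto
    qed
    then have "S = [x]" using S_def ij by (simp add: subpath_def drop_take take_Suc_conv_app_nth)
    then show ?thesis by simp
  next
    case False
    obtain p q p' q' where o: "onp E w a b x p" "onp E w c d x q" "onp E w a b y p'" "onp E w c d y q'"
      "p - q = p' - q'" using conn[of x y E w a b c d] xy False Fd Rd by blast
    have "onp E w a b x (path_weight w (take (Suc i) P))"
      unfolding onp_def using P ij by (metis le_less_trans)
    then have pe: "p = path_weight w (take (Suc i) P)" using o onp_unique by metis
    have "onp E w a b y (path_weight w L)"
      unfolding onp_def L_def using P ij by metis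
    then have pe': "p' = path_weight w L" using o onp_unique by metis
    have "path_weight w L = path_weight w (take (Suc i) L) + path_weight w S"
      using weight_split[OF iL] SL by simp
    then have wS: "path_weight w S = q' - q" using pe pe' o L_def ij by simp
    obtain Q1 k1 where Q1: "shortest_path E w c d Q1" "k1 < length Q1" "Q1!k1 = x"
      "path_weight w (take (Suc k1) Q1) = q" using o(2) onp_def by metis
    obtain Q2 k2 where Q2: "shortest_path E w c d Q2" "k2 < length Q2" "Q2!k2 = y"
      "path_weight w (take (Suc k2) Q2) = q'" using o(4) onp_def by metis
    have pQ1: "is_path E c x (take (Suc k1) Q1)" using path_pre Q1 shortest_path_def by metis
    have pQ2: "is_path E y d (drop k2 Q2)" using path_pre Q2 shortest_path_def by metis
    define R0 where "R0 = take (Suc k1) Q1 @ tl S"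
    define R1 where "R1 = R0 @ tl (drop k2 Q2)"
    have pR0: "is_path E c y R0" using path_join pQ1 pS R0_def by metis
    have pR1: "is_path E c d R1" using path_join pR0 pQ2 R1_def by metis
    have wR0: "path_weight w R0 = q + path_weight w S"
      using pw_join pQ1 pS R0_def Q1 by (metis is_path_def)
    have wR1: "path_weight w R1 = path_weight w R0 + path_weight w (drop k2 Q2)"
      using pw_join pR0 pQ2 R1_def by (metis is_path_def)
    have "path_weight w Q2 = q' + path_weight w (drop k2 Q2)" using weight_split Q2 by metis
    then have "path_weight w R1 = path_weight w Q2" using wR1 wR0 wS by simp
    then have spR1: "shortest_path E w c d R1" using Q2 pR1 unfolding shortest_path_def by metis
    have "set (path_edges S) \<subseteq> set (path_edges R0)"
      using pe_join pQ1 pS R0_def by (metis is_path_def Un_upper2 set_append)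
    also have "... \<subseteq> set (path_edges R1)"
      using pe_join pR0 pQ2 R1_def by (metis is_path_def Un_upper1 set_append)
    finally have "set (path_edges S) \<subseteq> sp_edges E w c d" using spR1 by (auto simp: sp_edges_def)
    then show ?thesis using Sab Fd by blast
  qed
  have "\<forall>u\<in>set S. (x, u) \<in> R\<^sup>*"
  proof
    fix u assume "u \<in> set S"
    then obtain m where "m < length S" "S!m = u" by (metis in_set_conv_nth)
    then show "(x, u) \<in> R\<^sup>*" using reach_sub[OF Scd] Sne Rd by metis
  qed
  then show ?thesis using Scd S_def by simp
qed

lemma path_in_V:
  assumes "is_path E a b P" "E \<subseteq> V \<times> V" "a \<in> V"
  shows "set P \<subseteq> V"
proof
  fix u assume "u \<in> set P"
  then obtain m where m: "m < length P" "P!m = u" by (metis in_set_conv_nth)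
  show "u \<in> V"
  proof (cases m)
    case 0 then show ?thesis using assms m by (auto simp: is_path_def hd_conv_nth)
  next
    case (Suc k)
    then have "(P!k, P!m) \<in> E" using pe_edge[of k P] m assms(1) by (auto simp: is_path_def)
    then show ?thesis using assms m by auto
  qed
qed

lemma sym_rtrancl: "(x, y) \<in> (F \<union> F\<inverse>)\<^sup>* \<Longrightarrow> (y, x) \<in> (F \<union> F\<inverse>)\<^sup>*"
proof -
  assume "(x, y) \<in> (F \<union> F\<inverse>)\<^sup>*"
  then have "(y, x) \<in> ((F \<union> F\<inverse>)\<inverse>)\<^sup>*" by (simp add: rtrancl_converse)
  moreover have "(F \<union> F\<inverse>)\<inverse> = F \<union> F\<inverse>" by auto
  ultimately show ?thesis by simp
qed

theorem lemma19:
  fixes V :: "'a set" and E :: "('a \<times> 'a) set" and w :: "'a \<times> 'a \<Rightarrow> real"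
    and s1 t1 s2 t2 :: 'a and s t :: 'a and P :: "'a list" and B :: "'a set"
    and x y :: 'a and i j :: nat
  assumes "dag V E"
    and "s1 \<in> V" "t1 \<in> V" "s2 \<in> V" "t2 \<in> V"
    and "(s, t) = (s1, t1) \<or> (s, t) = (s2, t2)"
    and "shortest_path E w s t P"
    and "B \<in> undirected_components V (sp_edges E w s1 t1 \<inter> sp_edges E w s2 t2)"
    and "x \<in> B" "y \<in> B"
    and "i \<le> j" "j < length P" "P ! i = x" "P ! j = y"
  shows "set (subpath P i j) \<subseteq> B \<and>
         set (path_edges (subpath P i j)) \<subseteq> sp_edges E w s1 t1 \<inter> sp_edges E w s2 t2"
proof -
  define F where "F = sp_edges E w s1 t1 \<inter> sp_edges E w s2 t2"
  define R where "R = F \<union> F\<inverse>"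
  have EV: "E \<subseteq> V \<times> V" and acyc: "\<forall>v. (v, v) \<notin> E\<^sup>+" using assms(1) unfolding dag_def by auto
  obtain v where v: "v \<in> V" "B = {u \<in> V. (v, u) \<in> R\<^sup>*}"
    using assms(8) unfolding undirected_components_def F_def R_def by blast
  have "(v, x) \<in> R\<^sup>*" "(v, y) \<in> R\<^sup>*" using v assms(9,10) by auto
  then have xy: "(x, y) \<in> R\<^sup>*" using sym_rtrancl R_def by (metis rtrancl_trans)
  have sV: "s \<in> V" using assms(2-6) by auto
  have res: "set (path_edges (subpath P i j)) \<subseteq> F \<and> (\<forall>u\<in>set (subpath P i j). (x, u) \<in> R\<^sup>*)"
  proof (cases "(s, t) = (s1, t1)")
    case True
    then show ?thesis using helper[OF acyc _ F_def R_def xy assms(11-14)] assms(7) by auto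
  next
    case False
    then have st: "(s, t) = (s2, t2)" using assms(6) by auto
    have F2: "F = sp_edges E w s2 t2 \<inter> sp_edges E w s1 t1" using F_def by blast
    show ?thesis using helper[OF acyc _ F2 R_def xy assms(11-14)] assms(7) st by auto
  qed
  have PV: "set P \<subseteq> V" using path_in_V assms(7) EV sV shortest_path_def by metis
  have "set (subpath P i j) \<subseteq> set P" unfolding subpath_def
    by (meson in_set_dropD in_set_takeD subsetI)
  then have "set (subpath P i j) \<subseteq> B"
    using res PV v \<open>(v, x) \<in> R\<^sup>*\<close> by (auto intro: rtrancl_trans)
  then show ?thesis using res F_def by simp
qed

end
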